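(* Let $H$ be a digraph with at least two vertices and $s\in V(H)$ such that every vertex of $H$ is reachable from $s$, and let $(\hat T,\{B_x\}_{x\in V(\hat T)})$ be the $s$-rooted cut decomposition of $H$. Let $y$ be a node of $\hat T$ such that the path in $\hat T$ from $s$ to $y$ contains at least $\ell\ge 1$ nodes $x$ whose sets $B_x$ are non-degenerate. Then $H$ contains an out-tree rooted at $s$ with at least $\ell$ leaves.
   Context: Digraphs are finite and without loops; paths are directed. An out-tree is an oriented tree with exactly one vertex of in-degree zero (its root); its leaves are its vertices of out-degree zero. A vertex $v$ is bi-reachable from $r$ if there are two internally vertex-disjoint directed paths from $r$ to $v$. For a digraph $H$ with at least two vertices and $r\in V(H)$ such that every vertex of $H$ is reachable from $r$, the diblock $B_r$ of $r$ in $H$ is the set of all vertices bi-reachable from $r$, together with $r$ and all out-neighbours of $r$. For $x\in B_r\setminus\{r\}$ let $X_x$ be the set of vertices $v\in V(H)\setminus B_r$ such that every directed $r$–$v$ path intersects $B_r$ for the last time in $x$; $x$ is a bottleneck of $B_r$ if $X_x\ne\emptyset$ (the sets $X_x$ partition $V(H)\setminus B_r$). The $r$-rooted cut decomposition $(\hat T,\{B_x\}_{x\in V(\hat T)})$ of $H$ is defined recursively: $\hat T$ is a rooted tree with root $r$ and $V(\hat T)\subseteq V(H)$; the set associated with the root is $B_r$; the children of $r$ are the bottlenecks of $B_r$; and for each bottleneck $x$, the subtree of $\hat T$ rooted at $x$ together with its associated sets is the $x$-rooted cut decomposition of the induced subgraph $H[X_x\cup\{x\}]$. A set $B_x$ is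 degenerate if $x$ is an internal (non-leaf) node of $\hat T$ and $|B_x|=2$; otherwise it is non-degenerate. *)

theory Defs
  imports Main
begin

definition is_path :: "'a set \<Rightarrow> ('a \<times> 'a) set \<Rightarrow> 'a list \<Rightarrow> 'a \<Rightarrow> 'a \<Rightarrow> bool" where
  "is_path V A p u v \<longleftrightarrow> p \<noteq> [] \<and> hd p = u \<and> last p = v \<and> distinct p \<and> set p \<subseteq> V \<and>
     (\<forall>i. Suc i < length p \<longrightarrow> (p ! i, p ! Suc i) \<in> A)"

definition ind :: "('a \<times> 'a) set \<Rightarrow> 'a set \<Rightarrow> ('a \<times> 'a) set" where
  "ind A S = A \<inter> (S \<times> S)"

definition bireach :: "'a set \<Rightarrow> ('a \<times> 'a) set \<Rightarrow> 'a \<Rightarrow> 'a \<Rightarrow> bool" where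
  "bireach V A r v \<longleftrightarrow> (\<exists>p q. is_path V A p r v \<and> is_path V A q r v \<and> p \<noteq> q \<and>
      (set p - {r, v}) \<inter> (set q - {r, v}) = {})"

definition diblock :: "'a set \<Rightarrow> ('a \<times> 'a) set \<Rightarrow> 'a \<Rightarrow> 'a set" where
  "diblock V A r = {v \<in> V. bireach V A r v} \<union> {r} \<union> {v. (r, v) \<in> A}"

definition Xset :: "'a set \<Rightarrow> ('a \<times> 'a) set \<Rightarrow> 'a \<Rightarrow> 'a \<Rightarrow> 'a set" where
  "Xset V A r x = {v \<in> V - diblock V A r.
      \<forall>p. is_path V A p r v \<longrightarrow> last (filter (\<lambda>u. u \<in> diblock V A r) p) = x}"

definition bottleneck :: "'a set \<Rightarrow> ('a \<times> 'a) set \<Rightarrow> 'a \<Rightarrow> 'a \<Rightarrow> bool" where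
  "bottleneck V A r x \<longleftrightarrow> x \<in> diblock V A r - {r} \<and> Xset V A r x \<noteq> {}"

text \<open>Root-to-node paths of the s-rooted cut decomposition of (V,A): each entry (x,S) is a
  node x of the decomposition tree together with the vertex set S of the subgraph H[S] whose
  x-rooted cut decomposition is the subtree at x; its associated set is diblock of x in H[S].\<close>
inductive cd_path :: "'a set \<Rightarrow> ('a \<times> 'a) set \<Rightarrow> 'a \<Rightarrow> ('a \<times> 'a set) list \<Rightarrow> bool"
  for V A s where
  root: "cd_path V A s [(s, V)]"
| child: "cd_path V A s (ps @ [(x, S)]) \<Longrightarrow> bottleneck S (ind A S) x b \<Longrightarrow>
    cd_path V A s (ps @ [(x, S), (b, insert b (Xset S (ind A S) x b))])"

text \<open>B_x degenerate: x internal node (B_x has a bottleneck) and |B_x| = 2\<close>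
definition nondeg :: "('a \<times> 'a) set \<Rightarrow> 'a \<times> 'a set \<Rightarrow> bool" where
  "nondeg A xS = (case xS of (x, S) \<Rightarrow>
     \<not> ((\<exists>b. bottleneck S (ind A S) x b) \<and> card (diblock S (ind A S) x) = 2))"

definition adj :: "('a \<times> 'a) set \<Rightarrow> 'a \<Rightarrow> 'a \<Rightarrow> bool" where
  "adj A u v \<longleftrightarrow> (u, v) \<in> A \<or> (v, u) \<in> A"

definition oriented_tree :: "'a set \<Rightarrow> ('a \<times> 'a) set \<Rightarrow> bool" where
  "oriented_tree V A \<longleftrightarrow> finite V \<and> V \<noteq> {} \<and> A \<subseteq> V \<times> V \<and>
     (\<forall>v. (v, v) \<notin> A) \<and> (\<forall>u v. (u, v) \<in> A \<longrightarrow> (v, u) \<notin> A) \<and>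
     (\<forall>u\<in>V. \<forall>v\<in>V. (u, v) \<in> (A \<union> A\<inverse>)\<^sup>*) \<and>
     \<not> (\<exists>c. 3 \<le> length c \<and> distinct c \<and> set c \<subseteq> V \<and>
          (\<forall>i < length c. adj A (c ! i) (c ! ((i + 1) mod length c))))"

definition out_tree :: "'a set \<Rightarrow> ('a \<times> 'a) set \<Rightarrow> 'a \<Rightarrow> bool" where
  "out_tree V A r \<longleftrightarrow> oriented_tree V A \<and> {v \<in> V. \<forall>u. (u, v) \<notin> A} = {r}"

definition leaves :: "'a set \<Rightarrow> ('a \<times> 'a) set \<Rightarrow> 'a set" where
  "leaves V A = {v \<in> V. \<forall>w. (v, w) \<notin> A}"

end

theory Submission
  imports Defs
begin


lemma cyc_arith:
  fixes n i :: nat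
  assumes "3 \<le> n" "i < n"
  obtains j where "j < n" "(j + 1) mod n = i" "(i + 1) mod n \<noteq> j"
proof (cases "i = 0")
  case True
  then show ?thesis using assms by (intro that[of "n - 1"]) auto
next
  case False
  show ?thesis
  proof (cases "i = n - 1")
    case True
    then show ?thesis using assms False by (intro that[of "i - 1"]) auto
  next
    case F2: False
    then show ?thesis using assms False by (intro that[of "i - 1"]) auto
  qed
qed

lemma attach1:
  assumes T: "out_tree TV TA s" and u: "u \<in> TV" and w: "w \<notin> TV"
  shows "out_tree (insert w TV) (insert (u,w) TA) s \<and>
         leaves (insert w TV) (insert (u,w) TA) = insert w (leaves TV TA - {u})"
proof -
  from T have ot: "oriented_tree TV TA" and rt: "{v \<in> TV. \<forall>z. (z,v) \<notin> TA} = {s}"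
    by (auto simp: out_tree_def)
  have sub: "TA \<subseteq> TV \<times> TV" and fin: "finite TV" and ne: "TV \<noteq> {}"
    and nl: "\<forall>v. (v, v) \<notin> TA" and asy: "\<forall>a b. (a, b) \<in> TA \<longrightarrow> (b, a) \<notin> TA"
    and con: "\<forall>a\<in>TV. \<forall>b\<in>TV. (a, b) \<in> (TA \<union> TA\<inverse>)\<^sup>*"
    and nocyc: "\<not> (\<exists>c. 3 \<le> length c \<and> distinct c \<and> set c \<subseteq> TV \<and>
          (\<forall>i < length c. adj TA (c ! i) (c ! ((i + 1) mod length c))))"
    using ot by (auto simp: oriented_tree_def)
  let ?V = "insert w TV" and ?A = "insert (u,w) TA"
  have uw: "u \<noteq> w" using u w by auto
  have adjw: "adj ?A w z \<Longrightarrow> z = u" for z using w sub by (auto simp: adj_def)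
  have adjsym: "adj X a b \<Longrightarrow> adj X b a" for X a b by (auto simp: adj_def)
  have adjo: "a \<noteq> w \<Longrightarrow> b \<noteq> w \<Longrightarrow> adj ?A a b \<Longrightarrow> adj TA a b" for a b
    by (auto simp: adj_def)
  let ?R = "?A \<union> ?A\<inverse>"
  have mono: "(a,b) \<in> (TA \<union> TA\<inverse>)\<^sup>* \<Longrightarrow> (a,b) \<in> ?R\<^sup>*" for a b
    by (rule rtrancl_mono[THEN subsetD]) auto
  have toU: "(a,u) \<in> ?R\<^sup>*" if "a \<in> ?V" for a
  proof (cases "a = w")
    case True then show ?thesis by auto
  next
    case False then show ?thesis using that con u mono by auto
  qed
  have fromU: "(u,a) \<in> ?R\<^sup>*" if "a \<in> ?V" for a
  proof (cases "a = w")
    case True then show ?thesis by auto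
  next
    case False then show ?thesis using that con u mono by auto
  qed
  have con': "\<forall>a\<in>?V. \<forall>b\<in>?V. (a, b) \<in> ?R\<^sup>*"
    using toU fromU by (meson rtrancl_trans)
  have nocyc': "\<not> (\<exists>c. 3 \<le> length c \<and> distinct c \<and> set c \<subseteq> ?V \<and>
          (\<forall>i < length c. adj ?A (c ! i) (c ! ((i + 1) mod length c))))"
  proof
    assume "\<exists>c. 3 \<le> length c \<and> distinct c \<and> set c \<subseteq> ?V \<and>
          (\<forall>i < length c. adj ?A (c ! i) (c ! ((i + 1) mod length c)))"
    then obtain c where len: "3 \<le> length c" and dc: "distinct c" and sc: "set c \<subseteq> ?V"
      and ac: "\<forall>i < length c. adj ?A (c ! i) (c ! ((i + 1) mod length c))" by blast
    show False
    proof (cases "w \<in> set c")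
      case False
      then have "set c \<subseteq> TV" using sc by auto
      moreover have "\<forall>i < length c. adj TA (c ! i) (c ! ((i + 1) mod length c))"
      proof (intro allI impI)
        fix i assume i: "i < length c"
        have "(i + 1) mod length c < length c" using len by (intro mod_less_divisor) auto
        then have "c ! i \<noteq> w" "c ! ((i + 1) mod length c) \<noteq> w" using i False
          by (metis nth_mem)+
        then show "adj TA (c ! i) (c ! ((i + 1) mod length c))" using adjo ac i by blast
      qed
      ultimately show False using nocyc len dc by blast
    next
      case True
      then obtain i where i: "i < length c" "c ! i = w" by (auto simp: in_set_conv_nth)
      obtain j where j: "j < length c" "(j + 1) mod length c = i" "(i + 1) mod length c \<noteq> j"
        using cyc_arith[OF len i(1)] by blast
      have "c ! ((i + 1) mod length c) = u" using ac i adjw by auto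
      moreover have "c ! j = u" using ac j i adjw adjsym by metis
      moreover have "(i + 1) mod length c < length c" using len by (intro mod_less_divisor) auto
      ultimately show False using dc j by (metis nth_eq_iff_index_eq)
    qed
  qed
  have ot': "oriented_tree ?V ?A"
    unfolding oriented_tree_def
    using fin sub nl asy uw u w con' nocyc' by (auto dest: subsetD[OF sub])
  have "{v \<in> ?V. \<forall>z. (z,v) \<notin> ?A} = {v \<in> TV. \<forall>z. (z,v) \<notin> TA}" using w u by auto
  with rt have rt': "{v \<in> ?V. \<forall>z. (z,v) \<notin> ?A} = {s}" by simp
  have lv: "leaves ?V ?A = insert w (leaves TV TA - {u})"
    unfolding leaves_def using w u sub by auto
  show ?thesis using ot' rt' lv by (simp add: out_tree_def)
qed

lemma attach:
  assumes "out_tree TV TA s" "p \<noteq> []" "hd p \<in> TV" "set (tl p) \<inter> TV = {}" "distinct p"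
  shows "out_tree (TV \<union> set p) (TA \<union> set (zip p (tl p))) s \<and>
    leaves (TV \<union> set p) (TA \<union> set (zip p (tl p))) =
      (if tl p = [] then leaves TV TA else insert (last p) (leaves TV TA - {hd p}))"
  using assms
proof (induction p arbitrary: TV TA)
  case Nil then show ?case by simp
next
  case (Cons u p)
  show ?case
  proof (cases p)
    case Nil
    then show ?thesis using Cons.prems by (simp add: insert_absorb)
  next
    case (Cons v rest)
    have uT: "u \<in> TV" using Cons.prems by simp
    have vT: "v \<notin> TV" using Cons.prems \<open>p = v # rest\<close> by auto
    note a1 = attach1[OF Cons.prems(1) uT vT]
    have IH: "out_tree (insert v TV \<union> set p) (insert (u,v) TA \<union> set (zip p (tl p))) s \<and>
      leaves (insert v TV \<union> set p) (insert (u,v) TA \<union> set (zip p (tl p))) =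
      (if tl p = [] then leaves (insert v TV) (insert (u,v) TA)
       else insert (last p) (leaves (insert v TV) (insert (u,v) TA) - {hd p}))"
      apply (rule Cons.IH)
      using a1 Cons.prems \<open>p = v # rest\<close> by auto
    have lvT: "leaves TV TA \<subseteq> TV" by (auto simp: leaves_def)
    have e1: "insert v TV \<union> set p = TV \<union> set (u # p)" using uT \<open>p = v # rest\<close> by auto
    have e2: "insert (u,v) TA \<union> set (zip p (tl p)) = TA \<union> set (zip (u#p) (tl (u#p)))"
      using \<open>p = v # rest\<close> by auto
    show ?thesis using IH a1 lvT vT \<open>p = v # rest\<close> unfolding e1 e2 by auto
  qed
qed



lemma path_arcs: "is_path V A p u v \<Longrightarrow> set (zip p (tl p)) \<subseteq> A"
  unfolding is_path_def by (auto simp: set_zip nth_tl)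

lemma path_take:
  assumes "is_path V A r x y" "i < length r"
  shows "is_path V A (take (Suc i) r) x (r ! i)"
proof -
  have ne: "r \<noteq> []" using assms(2) by auto
  have "take (Suc i) r \<noteq> []" using ne by simp
  moreover have "hd (take (Suc i) r) = x" using assms(1) ne unfolding is_path_def by simp
  moreover have "last (take (Suc i) r) = r ! i" using assms(2)
    by (simp add: take_Suc_conv_app_nth)
  moreover have "distinct (take (Suc i) r)" using assms(1) unfolding is_path_def by simp
  moreover have "set (take (Suc i) r) \<subseteq> V" using assms(1) unfolding is_path_def
    by (meson order_trans set_take_subset)
  moreover have "\<forall>k. Suc k < length (take (Suc i) r) \<longrightarrow>
     (take (Suc i) r ! k, take (Suc i) r ! Suc k) \<in> A"
    using assms(1) unfolding is_path_def by simp
  ultimately show ?thesis unfolding is_path_def by blast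
qed

lemma diblock_in: "x \<in> S \<Longrightarrow> diblock S (ind A S) x \<subseteq> S"
  by (auto simp: diblock_def ind_def)

lemma avoid0:
  assumes p: "is_path S B r x y" and u: "r ! i = u" "i < length r"
    and uX: "u \<in> Xset S B x b" and bD: "b \<in> diblock S B x"
  shows "\<exists>j<i. r ! j = b"
proof -
  let ?D = "diblock S B x"
  have pt: "is_path S B (take (Suc i) r) x u" using path_take[OF p u(2)] u by simp
  have "last (filter (\<lambda>u. u \<in> ?D) (take (Suc i) r)) = b"
    using uX pt unfolding Xset_def by blast
  moreover have "x \<in> ?D" by (simp add: diblock_def)
  moreover have "x \<in> set (take (Suc i) r)" using pt unfolding is_path_def by (metis hd_in_set)
  ultimately have "b \<in> set (take (Suc i) r)"
  proof -
    assume a: "last (filter (\<lambda>u. u \<in> ?D) (take (Suc i) r)) = b" "x \<in> ?D" "x \<in> set (take (Suc i) r)"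
    have ne: "filter (\<lambda>u. u \<in> ?D) (take (Suc i) r) \<noteq> []" using a(2,3) by (auto simp: filter_empty_conv)
    have "b \<in> set (filter (\<lambda>u. u \<in> ?D) (take (Suc i) r))" using last_in_set[OF ne] a(1) by simp
    then show ?thesis by simp
  qed
  then obtain j where j: "j < Suc i" "j < length r" "r ! j = b" by (auto simp: in_set_conv_nth)
  have "u \<notin> ?D" using uX by (auto simp: Xset_def)
  then have "j \<noteq> i" using j u bD by auto
  then show ?thesis using j by (metis less_Suc_eq)
qed

lemma avoid_nob:
  assumes p: "is_path S B r x y" and bD: "b \<in> diblock S B x" and nb: "b \<notin> set r"
  shows "set r \<inter> Xset S B x b = {}"
proof (rule ccontr)
  assume "set r \<inter> Xset S B x b \<noteq> {}"
  then obtain u where "u \<in> set r" "u \<in> Xset S B x b" by auto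
  then obtain i where "i < length r" "r ! i = u" by (auto simp: in_set_conv_nth)
  then obtain j where "j < i" "r ! j = b" using avoid0[OF p _ _ \<open>u \<in> Xset S B x b\<close> bD] by blast
  then show False using nb \<open>i < length r\<close> by auto
qed

lemma avoid_tob:
  assumes p: "is_path S B r x b" and bD: "b \<in> diblock S B x"
  shows "set r \<inter> Xset S B x b = {}"
proof (rule ccontr)
  assume "set r \<inter> Xset S B x b \<noteq> {}"
  then obtain u where "u \<in> set r" "u \<in> Xset S B x b" by auto
  then obtain i where i: "i < length r" "r ! i = u" by (auto simp: in_set_conv_nth)
  then obtain j where j: "j < i" "r ! j = b" using avoid0[OF p i(2) i(1) \<open>u \<in> Xset S B x b\<close> bD] by blast
  have "r ! (length r - 1) = b" "r \<noteq> []" "distinct r" using p unfolding is_path_def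
    by (auto simp: last_conv_nth)
  then have "j = length r - 1" using j i by (metis One_nat_def diff_less less_trans nth_eq_iff_index_eq zero_less_Suc length_greater_0_conv)
  then show False using j i by auto
qed



definition good :: "'a set \<Rightarrow> ('a \<times> 'a) set \<Rightarrow> 'a \<Rightarrow> 'a \<Rightarrow> 'a list \<Rightarrow> 'a list \<Rightarrow> bool" where
  "good S B x b P Q \<longleftrightarrow> is_path S B P x b \<and> Q \<noteq> [] \<and> hd Q = x \<and> tl Q \<noteq> [] \<and> distinct Q \<and>
     set Q \<subseteq> S \<and> set (zip Q (tl Q)) \<subseteq> B \<and> set P \<inter> set Q = {x} \<and>
     set Q \<inter> Xset S B x b = {} \<and> b \<notin> set Q"

lemma path_two:
  assumes "is_path S B q x b" "x \<noteq> b" "length q \<le> 2"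
  shows "q = [x, b]"
proof -
  have ne: "q \<noteq> []" and h: "hd q = x" and l: "last q = b" using assms(1) by (auto simp: is_path_def)
  have "length q \<noteq> 1"
  proof
    assume "length q = 1"
    then obtain a where "q = [a]" by (metis One_nat_def length_0_conv length_Suc_conv)
    then show False using h l assms(2) by simp
  qed
  moreover have "0 < length q" using ne by simp
  ultimately have "length q = 2" using assms(3) by linarith
  then obtain a c where "q = [a, c]"
    by (metis (no_types, lifting) One_nat_def Suc_1 length_0_conv length_Suc_conv)
  then show ?thesis using h l by simp
qed

lemma zip_butlast: "set (zip (butlast q) (tl (butlast q))) \<subseteq> set (zip q (tl q))"
proof (induction q)
  case Nil then show ?case by simp
next
  case (Cons a q)
  show ?case
  proof (cases q)
    case Nil then show ?thesis by simp
  next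
    case (Cons c r)
    have "butlast (a # q) = a # butlast q" using Cons by simp
    moreover have "set (zip (a # butlast q) (butlast q)) \<subseteq> insert (a, c) (set (zip (butlast q) (tl (butlast q))))"
      using Cons by (cases r) auto
    ultimately show ?thesis using Cons.IH Cons by auto
  qed
qed

lemma branch_bireach:
  assumes p: "is_path S B p x b" and q: "is_path S B q x b" and len: "3 \<le> length q"
    and xb: "x \<noteq> b" and disj: "(set p - {x, b}) \<inter> (set q - {x, b}) = {}"
    and bD: "b \<in> diblock S B x"
  shows "good S B x b p (butlast q)"
proof -
  let ?Q = "butlast q"
  have ne: "q \<noteq> []" and h: "hd q = x" and l: "last q = b" and dq: "distinct q"
    and sq: "set q \<subseteq> S" using q by (auto simp: is_path_def)
  have qe: "q = ?Q @ [b]" using ne l by (metis append_butlast_last_id)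
  have lQ: "2 \<le> length ?Q" using len by simp
  have Qne: "?Q \<noteq> []"
  proof
    assume "?Q = []"
    then have "length ?Q = 0" by (simp only: list.size)
    with lQ show False by linarith
  qed
  have hQ: "hd ?Q = x" using h Qne qe by (metis hd_append2)
  have tQ: "tl ?Q \<noteq> []" using lQ by (cases ?Q) auto
  have dQ: "distinct ?Q" and bQ: "b \<notin> set ?Q" using dq qe by (metis distinct_append distinct_butlast,
      metis distinct_append disjoint_iff list.set_intros(1))
  have sQ: "set ?Q \<subseteq> set q" by (meson in_set_butlastD subsetI)
  have aQ: "set (zip ?Q (tl ?Q)) \<subseteq> B" using zip_butlast path_arcs[OF q] by blast
  have xp: "x \<in> set p" using p by (auto simp: is_path_def)
  have xQ: "x \<in> set ?Q" using hQ Qne by (metis hd_in_set)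
  have PQ: "set p \<inter> set ?Q = {x}" using disj sQ bQ xp xQ by auto
  have QX: "set ?Q \<inter> Xset S B x b = {}" using avoid_tob[OF q bD] sQ by auto
  show ?thesis unfolding good_def using p Qne hQ tQ dQ sQ sq aQ PQ QX bQ by auto
qed

lemma path_tl_ne: "is_path S B q x v \<Longrightarrow> x \<noteq> v \<Longrightarrow> tl q \<noteq> []"
  by (cases q) (auto simp: is_path_def)

lemma branch_arc:
  assumes xb: "(x, b) \<in> ind A S" and vD: "v \<in> diblock S (ind A S) x" and vx: "v \<noteq> x" "v \<noteq> b"
    and bD: "b \<in> diblock S (ind A S) x" and xneb: "x \<noteq> b"
  shows "\<exists>Q. good S (ind A S) x b [x, b] Q"
proof -
  let ?B = "ind A S"
  have xS: "x \<in> S" "b \<in> S" using xb by (auto simp: ind_def)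
  have P: "is_path S ?B [x, b] x b" using xS xb xneb by (auto simp: is_path_def less_Suc_eq)
  show ?thesis
  proof (cases "(x, v) \<in> ?B")
    case True
    have vS: "v \<in> S" using True by (auto simp: ind_def)
    have Q: "is_path S ?B [x, v] x v" using xS vS True vx by (auto simp: is_path_def less_Suc_eq)
    have "b \<notin> set [x, v]" using xneb vx by auto
    from avoid_nob[OF Q bD this] have "set [x, v] \<inter> Xset S ?B x b = {}" .
    then have "good S ?B x b [x, b] [x, v]" unfolding good_def using P Q True vx vS xS xneb by auto
    then show ?thesis by blast
  next
    case False
    then have "bireach S ?B x v" using vD vx by (auto simp: diblock_def)
    then obtain p q where p: "is_path S ?B p x v" and q: "is_path S ?B q x v"
      and disj: "(set p - {x, v}) \<inter> (set q - {x, v}) = {}" unfolding bireach_def by blast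
    have "\<exists>r. is_path S ?B r x v \<and> b \<notin> set r"
    proof (cases "b \<in> set p")
      case True
      then have "b \<notin> set q" using disj xneb vx by auto
      then show ?thesis using q by blast
    next
      case False then show ?thesis using p by blast
    qed
    then obtain r where r: "is_path S ?B r x v" and br: "b \<notin> set r" by blast
    have "good S ?B x b [x, b] r" unfolding good_def
      using P r br avoid_nob[OF r bD] path_arcs[OF r] path_tl_ne[OF r] vx
      by (auto simp: is_path_def)
    then show ?thesis by blast
  qed
qed



lemma leaves_sub: "leaves TV TA \<subseteq> TV" by (auto simp: leaves_def)

lemma out_tree_fin: "out_tree TV TA s \<Longrightarrow> finite TV"
  by (simp add: out_tree_def oriented_tree_def)

lemma get_good:
  assumes bn: "bottleneck S (ind A S) x b" and nd: "nondeg A (x, S)" and xS: "x \<in> S"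
    and SV: "S \<subseteq> V" and fin: "finite V"
  shows "\<exists>P Q. good S (ind A S) x b P Q"
proof -
  let ?B = "ind A S" let ?D = "diblock S ?B x"
  have bD: "b \<in> ?D" and xb: "x \<noteq> b" using bn by (auto simp: bottleneck_def)
  have c2: "card ?D \<noteq> 2" using nd bn by (auto simp: nondeg_def)
  have xD: "x \<in> ?D" by (simp add: diblock_def)
  have finD: "finite ?D" using diblock_in[OF xS] SV fin by (meson finite_subset)
  have "\<exists>v. v \<in> ?D \<and> v \<noteq> x \<and> v \<noteq> b"
  proof (rule ccontr)
    assume "\<not> ?thesis"
    then have "?D = {x, b}" using xD bD by auto
    then show False using c2 xb by simp
  qed
  then obtain v where vD: "v \<in> ?D" "v \<noteq> x" "v \<noteq> b" by blast
  show ?thesis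
  proof (cases "bireach S ?B x b")
    case True
    then obtain p q where p: "is_path S ?B p x b" and q: "is_path S ?B q x b" and pq: "p \<noteq> q"
      and disj: "(set p - {x, b}) \<inter> (set q - {x, b}) = {}" unfolding bireach_def by blast
    show ?thesis
    proof (cases "3 \<le> length q")
      case True then show ?thesis using branch_bireach[OF p q True xb disj bD] by blast
    next
      case F: False
      show ?thesis
      proof (cases "3 \<le> length p")
        case True
        have disj': "(set q - {x, b}) \<inter> (set p - {x, b}) = {}" using disj by blast
        then show ?thesis using branch_bireach[OF q p True xb disj' bD] by blast
      next
        case False
        then have "p = [x, b]" "q = [x, b]" using path_two[OF p xb] path_two[OF q xb] F by auto
        then show ?thesis using pq by simp
      qed
    qed
  next
    case False
    then have "(x, b) \<in> ?B" using bD xb by (auto simp: diblock_def)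
    then show ?thesis using branch_arc[OF _ vD bD xb] by blast
  qed
qed

lemma get_main:
  assumes bn: "bottleneck S (ind A S) x b"
  shows "\<exists>P. is_path S (ind A S) P x b"
proof -
  let ?B = "ind A S" let ?D = "diblock S ?B x"
  have bD: "b \<in> ?D" and xb: "x \<noteq> b" using bn by (auto simp: bottleneck_def)
  show ?thesis
  proof (cases "bireach S ?B x b")
    case True then show ?thesis unfolding bireach_def by blast
  next
    case False
    then have a: "(x, b) \<in> ?B" using bD xb by (auto simp: diblock_def)
    then have "is_path S ?B [x, b] x b" using xb by (auto simp: is_path_def less_Suc_eq ind_def)
    then show ?thesis by blast
  qed
qed

lemma step:
  assumes SV: "S \<subseteq> V" and xS: "x \<in> S" and fin: "finite V" and bn: "bottleneck S (ind A S) x b"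
    and T: "out_tree TV TA s" and TVV: "TV \<subseteq> V" and TAA: "TA \<subseteq> A" and xL: "x \<in> leaves TV TA"
    and TS: "TV \<inter> S = {x}"
  shows "\<exists>TV' TA'. TV' \<subseteq> V \<and> TA' \<subseteq> A \<and> out_tree TV' TA' s \<and> b \<in> leaves TV' TA' \<and>
     TV' \<inter> insert b (Xset S (ind A S) x b) = {b} \<and>
     card (leaves TV TA) + (if nondeg A (x, S) then 1 else 0) \<le> card (leaves TV' TA')"
proof -
  let ?B = "ind A S" let ?D = "diblock S ?B x" let ?X = "Xset S ?B x b"
  have bD: "b \<in> ?D" and xb: "x \<noteq> b" using bn by (auto simp: bottleneck_def)
  have BA: "?B \<subseteq> A" by (auto simp: ind_def)
  have xD: "x \<in> ?D" by (simp add: diblock_def)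
  have bS: "b \<in> S" using diblock_in[OF xS] bD by auto
  have XS: "?X \<subseteq> S" unfolding Xset_def by blast
  have xX: "x \<notin> ?X" using xD unfolding Xset_def by blast
  have xT: "x \<in> TV" using xL leaves_sub[of TV TA] by (rule subsetD[rotated])
  have bT: "b \<notin> TV" using TS bS xb by auto
  have finL: "finite (leaves TV TA)" by (rule finite_subset[OF leaves_sub out_tree_fin[OF T]])
  have main: "out_tree (TV \<union> set P) (TA \<union> set (zip P (tl P))) s \<and>
      leaves (TV \<union> set P) (TA \<union> set (zip P (tl P))) = insert b (leaves TV TA - {x}) \<and>
      TV \<union> set P \<subseteq> V \<and> TA \<union> set (zip P (tl P)) \<subseteq> A \<and>
      (TV \<union> set P) \<inter> insert b ?X = {b} \<and>
      card (leaves (TV \<union> set P) (TA \<union> set (zip P (tl P)))) = card (leaves TV TA)"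
    if P: "is_path S ?B P x b" for P
  proof -
    have Pne: "P \<noteq> []" and hP: "hd P = x" and lP: "last P = b" and dP: "distinct P"
      and sP: "set P \<subseteq> S" using P by (auto simp: is_path_def)
    have tne: "tl P \<noteq> []" using path_tl_ne[OF P xb] .
    have Pe: "P = x # tl P" using Pne hP by (cases P) auto
    have t1: "set (tl P) \<inter> TV = {}"
    proof -
      have "z \<notin> TV" if z: "z \<in> set (tl P)" for z
      proof -
        have "z \<noteq> x" using dP Pe z by (metis distinct.simps(2))
        moreover have "z \<in> S" using sP z Pe by (metis list.set_intros(2) subsetD)
        ultimately show ?thesis using TS by auto
      qed
      then show ?thesis by blast
    qed
    have at: "out_tree (TV \<union> set P) (TA \<union> set (zip P (tl P))) s \<and>
      leaves (TV \<union> set P) (TA \<union> set (zip P (tl P))) = insert b (leaves TV TA - {x})"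
      using attach[OF T Pne _ t1 dP] hP xT tne lP by simp
    have bL: "b \<notin> leaves TV TA" using bT leaves_sub[of TV TA] by blast
    have cd: "card (insert b (leaves TV TA - {x})) = card (leaves TV TA)"
    proof -
      have "0 < card (leaves TV TA)" using finL xL card_gt_0_iff by blast
      then show ?thesis using finL bL xL by (simp add: card_Diff_singleton)
    qed
    have PX: "set P \<inter> ?X = {}" using avoid_tob[OF P bD] .
    have "(TV \<union> set P) \<inter> insert b ?X = {b}" using PX TS XS xX lP Pne bS by (auto dest: last_in_set)
    moreover have "TV \<union> set P \<subseteq> V" using TVV sP SV by auto
    moreover have "TA \<union> set (zip P (tl P)) \<subseteq> A" using TAA path_arcs[OF P] BA by auto
    ultimately show ?thesis using at cd by simp
  qed
  show ?thesis
  proof (cases "nondeg A (x, S)")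
    case False
    obtain P where P: "is_path S ?B P x b" using get_main[OF bn] by blast
    show ?thesis using main[OF P] False by (intro exI[of _ "TV \<union> set P"] exI[of _ "TA \<union> set (zip P (tl P))"]) auto
  next
    case True
    obtain P Q where g: "good S ?B x b P Q" using get_good[OF bn True xS SV fin] by blast
    then have P: "is_path S ?B P x b" and Qne: "Q \<noteq> []" and hQ: "hd Q = x" and tQ: "tl Q \<noteq> []"
      and dQ: "distinct Q" and sQ: "set Q \<subseteq> S" and aQ: "set (zip Q (tl Q)) \<subseteq> ?B"
      and PQ: "set P \<inter> set Q = {x}" and QX: "set Q \<inter> ?X = {}" and bQ: "b \<notin> set Q"
      unfolding good_def by auto
    note m = main[OF P]
    note m1 = m[THEN conjunct1]
    note m2 = m[THEN conjunct2, THEN conjunct1]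
    note m3 = m[THEN conjunct2, THEN conjunct2, THEN conjunct1] m[THEN conjunct2, THEN conjunct2, THEN conjunct2, THEN conjunct1]
    note m4 = m[THEN conjunct2, THEN conjunct2, THEN conjunct2, THEN conjunct2, THEN conjunct1]
    note m5 = m[THEN conjunct2, THEN conjunct2, THEN conjunct2, THEN conjunct2, THEN conjunct2]
    let ?TV = "TV \<union> set P" and ?TA = "TA \<union> set (zip P (tl P))"
    have Qe: "Q = x # tl Q" using Qne hQ by (cases Q) auto
    have t2: "set (tl Q) \<inter> ?TV = {}"
    proof -
      have "z \<notin> ?TV" if z: "z \<in> set (tl Q)" for z
      proof -
        have "z \<noteq> x" using dQ Qe z by (metis distinct.simps(2))
        moreover have "z \<in> set Q" using z Qe by (metis list.set_intros(2))
        moreover have "z \<in> S" using sQ \<open>z \<in> set Q\<close> by blast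
        ultimately show ?thesis using TS PQ by auto
      qed
      then show ?thesis by blast
    qed
    have xTV: "hd Q \<in> ?TV" using hQ xT by auto
    have at: "out_tree (?TV \<union> set Q) (?TA \<union> set (zip Q (tl Q))) s \<and>
      leaves (?TV \<union> set Q) (?TA \<union> set (zip Q (tl Q))) = insert (last Q) (leaves ?TV ?TA - {x})"
      using attach[OF m1 Qne xTV t2 dQ] hQ tQ by simp
    have lQ: "last Q \<in> set (tl Q)"
    proof -
      have "last Q = last (tl Q)" using tQ Qe by (metis last_ConsR)
      then show ?thesis using last_in_set[OF tQ] by simp
    qed
    have lQn: "last Q \<notin> leaves ?TV ?TA" using lQ t2 leaves_sub[of ?TV ?TA] by blast
    have xnL: "x \<notin> leaves ?TV ?TA" using m2 xb by auto
    have finL1: "finite (leaves ?TV ?TA)" using m2 finL by auto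
    have c: "card (insert (last Q) (leaves ?TV ?TA - {x})) = card (leaves TV TA) + 1"
      using m5 finL1 lQn xnL by simp
    have bL: "b \<in> leaves (?TV \<union> set Q) (?TA \<union> set (zip Q (tl Q)))"
      using at m2 xb by auto
    have "(?TV \<union> set Q) \<inter> insert b ?X = {b}" using m4 QX bQ by auto
    moreover have "?TV \<union> set Q \<subseteq> V" using m3 sQ SV by auto
    moreover have "?TA \<union> set (zip Q (tl Q)) \<subseteq> A" using m3 aQ BA by auto
    ultimately show ?thesis using at c bL True
      by (intro exI[of _ "?TV \<union> set Q"] exI[of _ "?TA \<union> set (zip Q (tl Q))"]) auto
  qed
qed



lemma single_tree: "out_tree {s} {} s \<and> leaves {s} {} = {s}"
proof -
  have nc: "\<not> (\<exists>c. 3 \<le> length c \<and> distinct c \<and> set c \<subseteq> {s} \<and>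
          (\<forall>i < length c. adj {} (c ! i) (c ! ((i + 1) mod length c))))"
  proof
    assume "\<exists>c. 3 \<le> length c \<and> distinct c \<and> set c \<subseteq> {s} \<and>
          (\<forall>i < length c. adj {} (c ! i) (c ! ((i + 1) mod length c)))"
    then obtain c where c: "3 \<le> length c" "distinct c" "set c \<subseteq> {s}" by blast
    have "card (set c) \<le> card {s}" using c(3) by (intro card_mono) auto
    then show False using c(1) distinct_card[OF c(2)] by simp
  qed
  show ?thesis unfolding out_tree_def oriented_tree_def leaves_def using nc by auto
qed

lemma inv:
  assumes "cd_path V A s ys" "finite V" "s \<in> V"
  shows "ys \<noteq> [] \<and> snd (last ys) \<subseteq> V \<and> fst (last ys) \<in> snd (last ys) \<and>
    (\<exists>TV TA. TV \<subseteq> V \<and> TA \<subseteq> A \<and> out_tree TV TA s \<and> fst (last ys) \<in> leaves TV TA \<and>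
       TV \<inter> snd (last ys) = {fst (last ys)} \<and>
       length (filter (nondeg A) (butlast ys)) + 1 \<le> card (leaves TV TA))"
  using assms(1)
proof induction
  case root
  have "{s} \<subseteq> V \<and> {} \<subseteq> A \<and> out_tree {s} {} s \<and> s \<in> leaves {s} {} \<and> {s} \<inter> V = {s} \<and>
      length (filter (nondeg A) []) + 1 \<le> card (leaves {s} {})"
    using single_tree[of s] assms(3) by auto
  then show ?case using assms(3) by auto
next
  case (child ps x S b)
  from child.IH have SV: "S \<subseteq> V" and xS: "x \<in> S" by auto
  from child.IH obtain TV TA where T: "TV \<subseteq> V" "TA \<subseteq> A" "out_tree TV TA s" "x \<in> leaves TV TA"
    "TV \<inter> S = {x}" "length (filter (nondeg A) ps) + 1 \<le> card (leaves TV TA)" by auto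
  obtain TV' TA' where T': "TV' \<subseteq> V" "TA' \<subseteq> A" "out_tree TV' TA' s" "b \<in> leaves TV' TA'"
     "TV' \<inter> insert b (Xset S (ind A S) x b) = {b}"
     "card (leaves TV TA) + (if nondeg A (x, S) then 1 else 0) \<le> card (leaves TV' TA')"
    using step[OF SV xS assms(2) child.hyps(2) T(3) T(1) T(2) T(4) T(5)] by blast
  have bD: "b \<in> diblock S (ind A S) x" using child.hyps(2) by (auto simp: bottleneck_def)
  have bS: "b \<in> S" using diblock_in[OF xS] bD by blast
  have XS: "Xset S (ind A S) x b \<subseteq> S" unfolding Xset_def by blast
  have "length (filter (nondeg A) (ps @ [(x, S)])) + 1 \<le> card (leaves TV' TA')"
    using T(6) T'(6) by (cases "nondeg A (x, S)") auto
  have l: "last (ps @ [(x, S), (b, insert b (Xset S (ind A S) x b))]) = (b, insert b (Xset S (ind A S) x b))"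
    by simp
  have bl: "butlast (ps @ [(x, S), (b, insert b (Xset S (ind A S) x b))]) = ps @ [(x, S)]"
    by (simp add: butlast_append)
  have "insert b (Xset S (ind A S) x b) \<subseteq> V" using bS XS SV by blast
  moreover have "\<exists>TV TA. TV \<subseteq> V \<and> TA \<subseteq> A \<and> out_tree TV TA s \<and> b \<in> leaves TV TA \<and>
       TV \<inter> insert b (Xset S (ind A S) x b) = {b} \<and>
       length (filter (nondeg A) (ps @ [(x, S)])) + 1 \<le> card (leaves TV TA)"
    using T' \<open>length (filter (nondeg A) (ps @ [(x, S)])) + 1 \<le> card (leaves TV' TA')\<close> by blast
  ultimately show ?case unfolding l bl by simp
qed

theorem lemma11:
  fixes V :: "'a set" and A :: "('a \<times> 'a) set" and s :: 'a and ys :: "('a \<times> 'a set) list"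
    and l :: nat
  assumes "finite V" and "A \<subseteq> V \<times> V" and "\<forall>v. (v, v) \<notin> A"
    and "2 \<le> card V" and "s \<in> V"
    and "\<forall>v\<in>V. \<exists>p. is_path V A p s v"
    and "cd_path V A s ys"
    and "1 \<le> l" and "l \<le> length (filter (nondeg A) ys)"
  shows "\<exists>TV TA. TV \<subseteq> V \<and> TA \<subseteq> A \<and> out_tree TV TA s \<and> l \<le> card (leaves TV TA)"
proof -
  note I = inv[OF assms(7) assms(1) assms(5)]
  then have ne: "ys \<noteq> []" by blast
  from I obtain TV TA where T: "TV \<subseteq> V" "TA \<subseteq> A" "out_tree TV TA s"
    "length (filter (nondeg A) (butlast ys)) + 1 \<le> card (leaves TV TA)" by blast
  have "ys = butlast ys @ [last ys]" using ne by simp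
  then have "length (filter (nondeg A) ys) \<le> length (filter (nondeg A) (butlast ys)) + 1"
  proof -
    have "length (filter (nondeg A) ys) = length (filter (nondeg A) (butlast ys)) + length (filter (nondeg A) [last ys])"
      using \<open>ys = butlast ys @ [last ys]\<close> by (metis filter_append length_append)
    moreover have "length (filter (nondeg A) [last ys]) \<le> 1" by simp
    ultimately show ?thesis by linarith
  qed
  then show ?thesis using T assms(9) by (intro exI[of _ TV] exI[of _ TA]) auto
qed

end
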